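(* Let $n, l$ be positive integers and $p$ a prime such that $p^l$ divides $n$ but $p^{l+1}$ does not divide $n$. Let $S \subseteq \mathbb{Z}_n$ with $0 \notin S$, $S=-S$, $|S| = p^l - 1$, such that the circulant graph $\mathrm{Cay}(\mathbb{Z}_n,S)$ is connected. Then $\mathrm{Cay}(\mathbb{Z}_n,S)$ admits a perfect code if and only if $s \not\equiv s' \pmod{p^l}$ for all distinct $s, s' \in S \cup \{0\}$.
   Context: $\mathbb{Z}_n$ is the additive group of integers modulo $n$; elements are identified with integers in $\{0,1,\dots,n-1\}$ (since $p^l \mid n$, congruence modulo $p^l$ is well defined on $\mathbb{Z}_n$). For an inverse-closed subset $S$ of $\mathbb{Z}_n$ not containing $0$, the circulant graph $\mathrm{Cay}(\mathbb{Z}_n,S)$ has vertex set $\mathbb{Z}_n$, with $u,v$ adjacent iff $v-u\in S$; its degree is $|S|$. A perfect code in a graph $\Gamma=(V,E)$ is a subset $C\subseteq V$ that is an independent set such that every vertex of $V\setminus C$ is adjacent to exactly one vertex of $C$. *)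

theory Defs
  imports Main "HOL-Number_Theory.Cong"
begin

text \<open>Z_n is modelled by the carrier {0..<n} of natural numbers, with arithmetic mod n.\<close>

definition zn :: "nat \<Rightarrow> nat set" where
  "zn n = {0..<n}"

definition zneg :: "nat \<Rightarrow> nat \<Rightarrow> nat" where
  "zneg n x = (n - x) mod n"

definition cay_adj :: "nat \<Rightarrow> nat set \<Rightarrow> nat \<Rightarrow> nat \<Rightarrow> bool" where
  "cay_adj n S u v \<longleftrightarrow> u \<in> zn n \<and> v \<in> zn n \<and> (v + n - u) mod n \<in> S"

definition cay_connected :: "nat \<Rightarrow> nat set \<Rightarrow> bool" where
  "cay_connected n S \<longleftrightarrow> (\<forall>u\<in>zn n. \<forall>v\<in>zn n. (cay_adj n S)\<^sup>*\<^sup>* u v)"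

definition perfect_code :: "nat \<Rightarrow> nat set \<Rightarrow> nat set \<Rightarrow> bool" where
  "perfect_code n S C \<longleftrightarrow> C \<subseteq> zn n
     \<and> (\<forall>u\<in>C. \<forall>v\<in>C. \<not> cay_adj n S u v)
     \<and> (\<forall>v\<in>zn n - C. \<exists>!c. c \<in> C \<and> cay_adj n S v c)"

definition has_perfect_code :: "nat \<Rightarrow> nat set \<Rightarrow> bool" where
  "has_perfect_code n S \<longleftrightarrow> (\<exists>C. perfect_code n S C)"

end

theory Submission
  imports Defs "HOL-Number_Theory.Number_Theory" "HOL-Computational_Algebra.Polynomial"
begin


lemma frob1:
  fixes a b :: "'a::comm_ring_1"
  assumes p: "prime (p::nat)"
  shows "of_nat p dvd ((a+b)^p - a^p - b^p)"
proof -
  have p0: "p > 0" using p prime_gt_0_nat by blast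
  have "(a+b)^p = (\<Sum>k\<le>p. of_nat (p choose k) * a^k * b^(p-k))"
    by (rule binomial_ring)
  also have "{..p} = insert 0 (insert p {1..<p})" using p0 by auto
  also have "(\<Sum>k\<in>insert 0 (insert p {1..<p}). of_nat (p choose k) * a^k * b^(p-k))
     = b^p + (a^p + (\<Sum>k\<in>{1..<p}. of_nat (p choose k) * a^k * b^(p-k)))"
    using p0 by (simp add: sum.insert)
  finally have eq: "(a+b)^p - a^p - b^p = (\<Sum>k\<in>{1..<p}. of_nat (p choose k) * a^k * b^(p-k))"
    by (simp add: algebra_simps)
  have "of_nat p dvd (\<Sum>k\<in>{1..<p}. of_nat (p choose k) * a^k * b^(p-k))"
  proof (rule dvd_sum)
    fix k assume "k \<in> {1..<p}"
    then have "p dvd (p choose k)" using dvd_choose_prime[of k p] p p0 by auto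
    then obtain t where "p choose k = p * t" by (auto elim: dvdE)
    then have "(of_nat p :: 'a) dvd of_nat (p choose k)" by simp
    then show "of_nat p dvd of_nat (p choose k) * a^k * b^(p-k)"
      by (simp add: mult.assoc)
  qed
  then show ?thesis using eq by simp
qed

lemma dvd_power_diff:
  fixes x y :: "'a::comm_ring_1"
  shows "(x - y) dvd (x^n - y^n)"
  using power_diff_sumr2[of x n y] by (metis dvd_triv_left)

lemma frob2:
  fixes a b :: "'a::comm_ring_1"
  assumes p: "prime (p::nat)"
  shows "of_nat p dvd ((a+b)^(p^k) - a^(p^k) - b^(p^k))"
proof (induction k)
  case 0
  then show ?case by simp
next
  case (Suc k)
  let ?X = "(a+b)^(p^k)" and ?Y = "a^(p^k) + b^(p^k)"
  have 1: "of_nat p dvd (?X^p - ?Y^p)"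
  proof -
    have "?X - ?Y = (a+b)^(p^k) - a^(p^k) - b^(p^k)" by (simp add: algebra_simps)
    then have "of_nat p dvd (?X - ?Y)" using Suc.IH by metis
    then show ?thesis using dvd_power_diff[of ?X ?Y p] dvd_trans by blast
  qed
  have 2: "of_nat p dvd (?Y^p - (a^(p^k))^p - (b^(p^k))^p)" by (rule frob1[OF p])
  have e: "\<And>z::'a. z^(p^Suc k) = (z^(p^k))^p" by (metis power_Suc2 power_mult)
  have "(a+b)^(p^Suc k) - a^(p^Suc k) - b^(p^Suc k) = (?X^p - ?Y^p) + (?Y^p - (a^(p^k))^p - (b^(p^k))^p)"
    by (simp only: e) (simp add: algebra_simps)
  then show ?case using dvd_add[OF 1 2] by metis
qed

lemma frob_sum:
  fixes f :: "'b \<Rightarrow> 'a::comm_ring_1"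
  assumes p: "prime (p::nat)" and A: "finite A"
  shows "of_nat p dvd ((\<Sum>i\<in>A. f i)^(p^k) - (\<Sum>i\<in>A. f i^(p^k)))"
  using A
proof (induction A rule: finite_induct)
  case empty
  have "p^k \<noteq> 0" using p prime_gt_0_nat by simp
  then have "(0::'a)^(p^k) = 0" by (simp only: power_0_left) simp
  then show ?case by simp
next
  case (insert x F)
  have 1: "of_nat p dvd ((f x + sum f F)^(p^k) - f x^(p^k) - (sum f F)^(p^k))" by (rule frob2[OF p])
  have "(\<Sum>i\<in>insert x F. f i)^(p^k) - (\<Sum>i\<in>insert x F. f i^(p^k)) =
     ((f x + sum f F)^(p^k) - f x^(p^k) - (sum f F)^(p^k)) + ((sum f F)^(p^k) - (\<Sum>i\<in>F. f i^(p^k)))"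
    using insert by (simp add: algebra_simps)
  then show ?case using dvd_add[OF 1 insert.IH] by metis
qed
lemma mdvd_mod:
  assumes n: "n > 0"
  shows "(monom (1::int) n - 1) dvd (monom 1 a - monom 1 (a mod n))"
proof -
  have a: "a = a mod n + n * (a div n)" by simp
  have "monom (1::int) a = monom 1 (a mod n) * (monom 1 n)^(a div n)"
    by (subst a) (simp add: monom_power mult_monom)
  then have e: "monom (1::int) a - monom 1 (a mod n) = monom 1 (a mod n) * ((monom 1 n)^(a div n) - 1^(a div n))"
    by (simp add: algebra_simps)
  show ?thesis unfolding e using dvd_power_diff[of "monom (1::int) n" 1 "a div n"]
    by (simp add: dvd_mult)
qed

lemma U_shift:
  "(monom (1::int) n - 1) dvd (monom 1 a * (\<Sum>k<n. monom 1 k) - (\<Sum>k<n. monom 1 k))"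
proof -
  have pw: "\<And>i. (monom (1::int) 1)^i = monom 1 i" by (simp add: monom_power)
  have 1: "monom (1::int) n - 1 = (monom 1 1 - 1) * (\<Sum>k<n. monom 1 k)"
  proof -
    have s: "(\<Sum>i<n. (monom (1::int) 1)^i) = (\<Sum>k<n. monom 1 k)" by (rule sum.cong) (simp_all only: pw)
    show ?thesis using power_diff_1_eq[of "monom (1::int) 1" n] unfolding s pw .
  qed
  obtain Q where Q: "monom (1::int) a - 1 = (monom 1 1 - 1) * Q"
  proof -
    have "(monom (1::int) 1 - 1) dvd (monom 1 a - 1)"
      using dvd_power_diff[of "monom (1::int) 1" 1 a] unfolding pw power_one .
    then show ?thesis using that by (auto elim: dvdE)
  qed
  have "monom 1 a * (\<Sum>k<n. monom 1 k) - (\<Sum>k<n. monom 1 k) = (monom (1::int) a - 1) * (\<Sum>k<n. monom 1 k)"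
    by (simp add: algebra_simps)
  also have "\<dots> = Q * ((monom 1 1 - 1) * (\<Sum>k<n. monom 1 k))" unfolding Q by (simp only: ac_simps)
  also have "\<dots> = Q * (monom 1 n - 1)" unfolding 1 ..
  finally show ?thesis by simp
qed

lemma coeff_extract:
  fixes R A B :: "int poly"
  assumes n: "n > 0" and hi: "\<forall>i\<ge>n. coeff R i = 0"
    and eq: "R = of_nat p * A + (monom 1 n - 1) * B"
  shows "int p dvd coeff R i"
proof -
  have cB: "\<And>i. coeff ((monom 1 n - 1) * B) i = (if i < n then 0 else coeff B (i - n)) - coeff B i"
    by (simp add: left_diff_distrib coeff_monom_mult)
  have cA: "\<And>i. coeff (of_nat p * A) i = int p * coeff A i"
    by (simp add: of_nat_mult_conv_smult)
  have cR: "\<And>i. coeff R i = int p * coeff A i + ((if i < n then 0 else coeff B (i - n)) - coeff B i)"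
    using eq cA cB by simp
  have claim: "\<forall>i. degree B < i + d \<longrightarrow> int p dvd coeff B i" for d
  proof (induction d)
    case 0
    then show ?case by (simp add: coeff_eq_0)
  next
    case (Suc d)
    show ?case
    proof (intro allI impI)
      fix i assume "degree B < i + Suc d"
      then have "degree B < (i + n) + d" using n by simp
      then have 1: "int p dvd coeff B (i + n)" using Suc.IH by blast
      have 2: "coeff R (i + n) = 0" using hi by simp
      have "coeff R (i+n) = int p * coeff A (i+n) + (coeff B i - coeff B (i + n))"
        using cR[of "i+n"] by simp
      then have "coeff B i = - int p * coeff A (i+n) + coeff B (i + n)" using 2 by simp
      then show "int p dvd coeff B i" using 1 by simp
    qed
  qed
  have allB: "int p dvd coeff B j" for j using claim[of "degree B + 1"] by simp
  show ?thesis
  proof (cases "i < n")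
    case True
    then show ?thesis using cR[of i] allB[of i] by simp
  next
    case False
    then show ?thesis using cR[of i] allB by simp
  qed
qed

lemma tijdeman:
  fixes C :: "nat set" and D :: "'b set" and e :: "'b \<Rightarrow> nat"
  assumes p: "prime p" and n: "n > 0" and fC: "finite C" and fD: "finite D"
    and bij: "bij_betw (\<lambda>(c,d). (c + e d) mod n) (C \<times> D) {..<n}"
    and cop: "\<not> p dvd card C" and q: "q = p ^ l"
  shows "bij_betw (\<lambda>(c,d). (q * c + e d) mod n) (C \<times> D) {..<n}"
proof -
  define M :: "int poly" where "M = monom 1 n - 1"
  define Cp :: "int poly" where "Cp = (\<Sum>c\<in>C. monom 1 c)"
  define Dp :: "int poly" where "Dp = (\<Sum>d\<in>D. monom 1 (e d))"
  define Cq :: "int poly" where "Cq = (\<Sum>c\<in>C. monom 1 (q * c))"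
  define U :: "int poly" where "U = (\<Sum>k<n. monom 1 k)"
  define m where "m = card C"
  define h where "h = (\<lambda>(c,d). (c + e d) mod n)"
  define hq where "hq = (\<lambda>(c::nat,d). (q * c + e d) mod n)"
  have fCD: "finite (C \<times> D)" using fC fD by simp
  have q1: "q \<ge> 1" using q p prime_gt_0_nat by (simp add: Suc_leI)
  have S1: "M dvd (Cp * Dp - U)"
  proof -
    have "Cp * Dp = (\<Sum>z\<in>C \<times> D. monom 1 (fst z + e (snd z)))"
      unfolding Cp_def Dp_def sum_product sum.cartesian_product by (simp add: mult_monom case_prod_beta)
    moreover have "U = (\<Sum>z\<in>C \<times> D. monom 1 (h z))"
      unfolding U_def h_def using sum.reindex_bij_betw[OF bij, of "monom (1::int)"] by (simp add: comp_def)
    ultimately have "Cp * Dp - U = (\<Sum>z\<in>C \<times> D. monom 1 (fst z + e (snd z)) - monom 1 (h z))"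
      by (simp add: sum_subtractf)
    moreover have "M dvd (\<Sum>z\<in>C \<times> D. monom 1 (fst z + e (snd z)) - monom 1 (h z))"
      by (rule dvd_sum) (auto simp: M_def h_def case_prod_beta intro: mdvd_mod[OF n])
    ultimately show ?thesis by simp
  qed
  have S2: "of_nat p dvd (Cp ^ q - Cq)"
  proof -
    have "Cq = (\<Sum>c\<in>C. (monom 1 c)^(p^l))"
      unfolding Cq_def q by (simp add: monom_power mult.commute)
    then show ?thesis using frob_sum[OF p fC, of "monom 1" l] unfolding Cp_def q by simp
  qed
  have CU: "M dvd (Cp * U - of_nat m * U)"
  proof -
    have "Cp * U - of_nat m * U = (\<Sum>c\<in>C. monom 1 c * U - U)"
      unfolding Cp_def m_def by (simp add: sum_subtractf sum_distrib_right)
    moreover have "M dvd (\<Sum>c\<in>C. monom 1 c * U - U)"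
      by (rule dvd_sum) (simp add: M_def U_def U_shift)
    ultimately show ?thesis by simp
  qed
  have S3: "M dvd (Cp ^ k * U - of_nat (m ^ k) * U)" for k
  proof (induction k)
    case 0
    then show ?case by simp
  next
    case (Suc k)
    have "Cp ^ Suc k * U - of_nat (m ^ Suc k) * U
        = Cp * (Cp ^ k * U - of_nat (m ^ k) * U) + of_nat (m ^ k) * (Cp * U - of_nat m * U)"
      by (simp add: algebra_simps)
    then show ?case using Suc.IH CU by (simp add: dvd_add)
  qed
  have S4: "of_nat p dvd (of_nat (m ^ (q - 1)) * U - U)"
  proof -
    have f: "[m ^ (p - 1) = 1] (mod p)" using fermat_theorem[OF p] cop m_def by simp
    have "[(p - 1) + 1 = 0 + 1] (mod (p - 1))" by (rule cong_add) (simp_all add: cong_def)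
    moreover have "p - 1 + 1 = p" using p prime_gt_0_nat by simp
    ultimately have "[p = 1] (mod (p - 1))" by simp
    then have "[p ^ l = 1 ^ l] (mod (p - 1))" by (rule cong_pow)
    then have "(p - 1) dvd (q - 1)" unfolding q power_one by (rule cong_to_1_nat)
    then obtain t where t: "q - 1 = (p - 1) * t" by (auto elim: dvdE)
    have "[m ^ (q - 1) = 1 ^ t] (mod p)" unfolding t power_mult using f by (rule cong_pow)
    then have "[m ^ (q - 1) = 1] (mod p)" by simp
    moreover have "m ^ (q - 1) \<ge> 1"
    proof -
      have "m \<noteq> 0" using cop m_def by (intro notI) simp
      then show ?thesis by simp
    qed
    ultimately obtain s where s: "m ^ (q - 1) = 1 + p * s"
    proof -
      assume a: "\<And>s. m ^ (q - 1) = 1 + p * s \<Longrightarrow> thesis"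
      from \<open>[m ^ (q - 1) = 1] (mod p)\<close> have "p dvd m ^ (q - 1) - 1" by (rule cong_to_1_nat)
      then obtain s where "m ^ (q - 1) - 1 = p * s" by (auto elim: dvdE)
      then show thesis using a[of s] \<open>m ^ (q - 1) \<ge> 1\<close> by simp
    qed
    have "of_nat (m ^ (q - 1)) * U - U = of_nat p * (of_nat s * U)"
      unfolding s by (simp add: algebra_simps)
    then show ?thesis by simp
  qed
  have Cpq: "Cp ^ q = Cp ^ (q - 1) * Cp" using q1 by (cases q) (simp_all add: power_Suc2)
  obtain A1 where A1: "Cp ^ q - Cq = of_nat p * A1" using S2 by (auto elim: dvdE)
  obtain B1 where B1: "Cp * Dp - U = M * B1" using S1 by (auto elim: dvdE)
  obtain B2 where B2: "Cp ^ (q - 1) * U - of_nat (m ^ (q - 1)) * U = M * B2" using S3 by (auto elim: dvdE)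
  obtain A2 where A2: "of_nat (m ^ (q - 1)) * U - U = of_nat p * A2" using S4 by (auto elim: dvdE)
  have comb: "Cq * Dp - U = of_nat p * (A2 - A1 * Dp) + M * (Cp ^ (q - 1) * B1 + B2)"
  proof -
    have "Cq * Dp - U = - (Cp ^ q - Cq) * Dp + Cp ^ (q - 1) * (Cp * Dp - U)
        + (Cp ^ (q - 1) * U - of_nat (m ^ (q - 1)) * U) + (of_nat (m ^ (q - 1)) * U - U)"
      unfolding Cpq by (simp add: algebra_simps)
    also have "\<dots> = of_nat p * (A2 - A1 * Dp) + M * (Cp ^ (q - 1) * B1 + B2)"
      unfolding A1 B1 B2 A2 by (simp add: algebra_simps)
    finally show ?thesis .
  qed
  define N where "N g = card {z \<in> C \<times> D. hq z = g}" for g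
  define W :: "int poly" where "W = (\<Sum>g<n. of_nat (N g) * monom 1 g)"
  have S5: "M dvd (Cq * Dp - W)"
  proof -
    have "Cq * Dp = (\<Sum>z\<in>C \<times> D. monom 1 (q * fst z + e (snd z)))"
      unfolding Cq_def Dp_def sum_product sum.cartesian_product by (simp add: mult_monom case_prod_beta)
    moreover have "W = (\<Sum>z\<in>C \<times> D. monom 1 (hq z))"
    proof -
      have "(\<Sum>z\<in>C \<times> D. monom 1 (hq z)) = (\<Sum>g<n. \<Sum>z\<in>{z \<in> C \<times> D. hq z = g}. monom (1::int) (hq z))"
        by (rule sum.group[symmetric]) (auto simp: fCD hq_def n)
      also have "\<dots> = W" unfolding W_def N_def by (rule sum.cong) auto
      finally show ?thesis by simp
    qed
    ultimately have "Cq * Dp - W = (\<Sum>z\<in>C \<times> D. monom 1 (q * fst z + e (snd z)) - monom 1 (hq z))"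
      by (simp add: sum_subtractf)
    moreover have "M dvd (\<Sum>z\<in>C \<times> D. monom 1 (q * fst z + e (snd z)) - monom 1 (hq z))"
      by (rule dvd_sum) (auto simp: M_def hq_def case_prod_beta intro: mdvd_mod[OF n])
    ultimately show ?thesis by simp
  qed
  obtain B3 where B3: "Cq * Dp - W = M * B3" using S5 by (auto elim: dvdE)
  define R where "R = W - U"
  have Req: "R = of_nat p * (A2 - A1 * Dp) + M * (Cp ^ (q - 1) * B1 + B2 - B3)"
    using comb B3 unfolding R_def by (simp add: algebra_simps)
  have cR: "coeff R i = (if i < n then int (N i) - 1 else 0)" for i
  proof -
    have "coeff W i = (\<Sum>g<n. int (N g) * (if g = i then 1 else 0))"
      unfolding W_def coeff_sum by (simp add: of_nat_mult_conv_smult coeff_monom)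
    moreover have "coeff U i = (\<Sum>g<n. (if g = i then 1 else 0))"
      unfolding U_def coeff_sum by (simp add: coeff_monom)
    ultimately show ?thesis unfolding R_def by (simp add: if_distrib cong: if_cong)
  qed
  have pdv: "int p dvd coeff R i" for i
    by (rule coeff_extract[OF n _ Req[unfolded M_def]]) (simp add: cR)
  have Npos: "N g \<noteq> 0" if "g < n" for g
  proof
    assume "N g = 0"
    then have "int p dvd -1" using pdv[of g] cR[of g] that by simp
    then have "int p dvd int 1" by simp
    then have "p dvd 1" by (simp only: int_dvd_int_iff)
    then show False using p by simp
  qed
  have surj: "hq ` (C \<times> D) = {..<n}"
  proof
    show "hq ` (C \<times> D) \<subseteq> {..<n}" using n by (auto simp: hq_def)
    show "{..<n} \<subseteq> hq ` (C \<times> D)"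
    proof
      fix g assume g: "g \<in> {..<n}"
      have "N g \<noteq> 0" using Npos g by simp
      then have "{z \<in> C \<times> D. hq z = g} \<noteq> {}" unfolding N_def by (intro notI) simp
      then obtain z where "z \<in> C \<times> D" "hq z = g" by blast
      then show "g \<in> hq ` (C \<times> D)" by (auto simp del: image_iff intro!: image_eqI)
    qed
  qed
  have "card (C \<times> D) = n" using bij_betw_same_card[OF bij] by simp
  then have "inj_on hq (C \<times> D)" using inj_on_iff_eq_card[OF fCD, of hq] surj by simp
  then show ?thesis using surj unfolding hq_def bij_betw_def by simp
qed


lemma key_int:
  fixes c v s n :: int
  assumes "0 \<le> c" "c < n" "0 \<le> s" "s < n"
  shows "((c - v) mod n = s) \<longleftrightarrow> (c = (v + s) mod n)"
proof
  assume h: "(c - v) mod n = s"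
  have "c = c mod n" using assms by simp
  also have "\<dots> = ((c - v) + v) mod n" by simp
  also have "\<dots> = ((c - v) mod n + v) mod n" by (rule mod_add_left_eq[symmetric])
  finally show "c = (v + s) mod n" using h by (simp add: add.commute)
next
  assume h: "c = (v + s) mod n"
  have "(c - v) mod n = ((v + s) mod n - v) mod n" using h by simp
  also have "\<dots> = (v + s - v) mod n" by (rule mod_diff_left_eq)
  finally show "(c - v) mod n = s" using assms by simp
qed

lemma key2:
  fixes c v s n :: nat
  assumes "c < n" "v < n" "s < n"
  shows "((c + n - v) mod n = s) \<longleftrightarrow> (c = (v + s) mod n)"
proof -
  have i1: "int ((c + n - v) mod n) = (int c - int v) mod int n"
  proof -
    have "int ((c + n - v) mod n) = (int c + int n - int v) mod int n"
      using assms by (simp add: zmod_int of_nat_diff)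
    also have "\<dots> = (int c - int v + int n) mod int n" by (simp add: algebra_simps)
    finally show ?thesis by simp
  qed
  have i2: "int ((v + s) mod n) = (int v + int s) mod int n" by (simp add: zmod_int)
  have "((c + n - v) mod n = s) \<longleftrightarrow> ((int c - int v) mod int n = int s)"
    using i1 by linarith
  also have "\<dots> \<longleftrightarrow> (int c = (int v + int s) mod int n)"
    by (rule key_int) (use assms in auto)
  also have "\<dots> \<longleftrightarrow> (c = (v + s) mod n)" using i2 by linarith
  finally show ?thesis .
qed

lemma key1:
  fixes c v s n :: nat
  assumes "c < n" "v < n" "s < n"
  shows "((c + (n - s)) mod n = v) \<longleftrightarrow> (c = (v + s) mod n)"
proof -
  have i1: "int ((c + (n - s)) mod n) = (int c - int s) mod int n"
  proof -
    have "int ((c + (n - s)) mod n) = (int c + int n - int s) mod int n"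
      using assms by (simp add: zmod_int of_nat_diff)
    also have "\<dots> = (int c - int s + int n) mod int n" by (simp add: algebra_simps)
    finally show ?thesis by simp
  qed
  have i2: "int ((v + s) mod n) = (int s + int v) mod int n" by (simp add: zmod_int add.commute)
  have "((c + (n - s)) mod n = v) \<longleftrightarrow> ((int c - int s) mod int n = int v)"
    using i1 by linarith
  also have "\<dots> \<longleftrightarrow> (int c = (int s + int v) mod int n)"
    by (rule key_int) (use assms in auto)
  also have "\<dots> \<longleftrightarrow> (c = (v + s) mod n)" using i2 by linarith
  finally show ?thesis .
qed

lemma zn_finite: "finite (zn n)" by (simp add: zn_def)

theorem theorem1p2:
  fixes n l p :: nat and S :: "nat set"
  assumes "n > 0" and "l > 0" and "prime p"
    and "p ^ l dvd n" and "\<not> p ^ (l + 1) dvd n"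
    and "S \<subseteq> zn n" and "0 \<notin> S"
    and "\<forall>s\<in>S. zneg n s \<in> S"
    and "card S = p ^ l - 1"
    and "cay_connected n S"
  shows "has_perfect_code n S \<longleftrightarrow>
           (\<forall>s\<in>S \<union> {0}. \<forall>s'\<in>S \<union> {0}. s \<noteq> s' \<longrightarrow> \<not> [s = s'] (mod p ^ l))"
proof -
  note n = assms(1) and p = assms(3) and Sn = assms(6) and S0 = assms(7)
  define q where "q = p ^ l"
  define D where "D = S \<union> {0}"
  have p2: "p \<ge> 2" using p prime_ge_2_nat by blast
  have q2: "q \<ge> 2"
  proof -
    have "p ^ 1 \<le> p ^ l" using assms(2) p2 by (intro power_increasing) auto
    then show ?thesis using p2 unfolding q_def by simp
  qed
  have qn: "q dvd n" using assms(4) q_def by simp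
  have fS: "finite S" using Sn zn_finite finite_subset by blast
  have cD: "card D = q" unfolding D_def using fS S0 assms(9) q2 q_def by simp
  have fD: "finite D" using fS D_def by simp
  have Dn: "\<And>d. d \<in> D \<Longrightarrow> d < n" using Sn n unfolding D_def zn_def by auto
  show ?thesis
  proof
    assume "has_perfect_code n S"
    then obtain C where C: "perfect_code n S C" unfolding has_perfect_code_def by blast
    have Cn: "C \<subseteq> {..<n}" using C unfolding perfect_code_def zn_def by auto
    have fC: "finite C" using Cn finite_subset by blast
    have indep: "\<And>u v. u \<in> C \<Longrightarrow> v \<in> C \<Longrightarrow> \<not> cay_adj n S u v"
      using C unfolding perfect_code_def by blast
    have uniq: "\<And>v. v < n \<Longrightarrow> v \<notin> C \<Longrightarrow> \<exists>!c. c \<in> C \<and> cay_adj n S v c"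
      using C unfolding perfect_code_def zn_def by auto
    define h where "h = (\<lambda>(c::nat,d::nat). (c + (n - d)) mod n)"
    have hval: "h (c, d) = v \<longleftrightarrow> d = (c + n - v) mod n" if "c \<in> C" "d \<in> D" "v < n" for c d v
    proof -
      have cn: "c < n" using that(1) Cn by auto
      have dn: "d < n" using that(2) Dn by auto
      have "h (c, d) = v \<longleftrightarrow> c = (v + d) mod n" unfolding h_def
        using key1[OF cn that(3) dn] by simp
      also have "\<dots> \<longleftrightarrow> (c + n - v) mod n = d" using key2[OF cn that(3) dn] by simp
      finally show ?thesis by auto
    qed
    have bij: "bij_betw h (C \<times> D) {..<n}"
    proof (rule bij_betw_imageI)
      show "inj_on h (C \<times> D)"
      proof (rule inj_onI, clarify)
        fix c d c' d' assume c: "c \<in> C" and d: "d \<in> D" and c': "c' \<in> C" and d': "d' \<in> D"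
          and eq: "h (c, d) = h (c', d')"
        define v where "v = h (c, d)"
        have v: "v < n" unfolding v_def h_def using n by simp
        have dv: "d = (c + n - v) mod n" using hval[OF c d v] v_def by simp
        have dv': "d' = (c' + n - v) mod n" using hval[OF c' d' v] v_def eq by simp
        have adj1: "cay_adj n S v c" if "d \<noteq> 0" using that dv d c v Cn unfolding D_def cay_adj_def zn_def by auto
        have adj2: "cay_adj n S v c'" if "d' \<noteq> 0" using that dv' d' c' v Cn unfolding D_def cay_adj_def zn_def by auto
        have cn: "c < n" using c Cn by auto
        have c'n: "c' < n" using c' Cn by auto
        have cv: "c = v" if "d = 0"
          using key2[OF cn v n] that dv v by simp
        have cv': "c' = v" if "d' = 0"
          using key2[OF c'n v n] that dv' v by simp
        have "c = c'"
        proof (cases "d = 0")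
          case True
          show ?thesis
          proof (cases "d' = 0")
            case True then show ?thesis using cv cv' \<open>d = 0\<close> by simp
          next
            case False then show ?thesis using adj2 cv \<open>d = 0\<close> c c' indep by blast
          qed
        next
          case False
          show ?thesis
          proof (cases "d' = 0")
            case True then show ?thesis using adj1 cv' \<open>d \<noteq> 0\<close> c c' indep by blast
          next
            case False
            have "v \<notin> C" using adj1 \<open>d \<noteq> 0\<close> c indep by blast
            then show ?thesis using uniq[OF v] adj1 adj2 \<open>d \<noteq> 0\<close> False c c' by blast
          qed
        qed
        then show "c = c' \<and> d = d'" using dv dv' by simp
      qed
    next
      show "h ` (C \<times> D) = {..<n}"
      proof
        show "h ` (C \<times> D) \<subseteq> {..<n}" using n by (auto simp: h_def)
        show "{..<n} \<subseteq> h ` (C \<times> D)"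
        proof
          fix v assume "v \<in> {..<n}"
          then have v: "v < n" by simp
          show "v \<in> h ` (C \<times> D)"
          proof (cases "v \<in> C")
            case True
            have "0 \<in> D" unfolding D_def by simp
            moreover have "h (v, 0) = v" unfolding h_def using v by simp
            ultimately show ?thesis using True by force
          next
            case False
            then obtain c where c: "c \<in> C" "cay_adj n S v c" using uniq[OF v] by blast
            define d where "d = (c + n - v) mod n"
            have "d \<in> D" using c d_def unfolding cay_adj_def D_def by simp
            moreover have "h (c, d) = v" using hval[OF c(1) \<open>d \<in> D\<close> v] d_def by simp
            ultimately show ?thesis using c by force
          qed
        qed
      qed
    qed
    have cardCD: "card C * q = n" using bij_betw_same_card[OF bij] fC fD cD by (simp add: card_cartesian_product)
    define m where "m = card C"
    have cop: "\<not> p dvd card C"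
    proof
      assume "p dvd card C"
      then obtain t where "card C = p * t" by (auto elim: dvdE)
      then have "n = p ^ (l + 1) * t" using cardCD q_def by (simp add: algebra_simps)
      then show False using assms(5) by simp
    qed
    have bij2: "bij_betw (\<lambda>(c,d). (q * c + (n - d)) mod n) (C \<times> D) {..<n}"
      by (rule tijdeman[OF p n fC fD _ cop q_def]) (use bij in \<open>simp add: h_def\<close>)
    define hq where "hq = (\<lambda>(c::nat,d::nat). (q * c + (n - d)) mod n)"
    have injq: "inj_on hq (C \<times> D)" using bij2 unfolding hq_def bij_betw_def by simp
    have m0: "m > 0" using cardCD n m_def by (cases m) auto
    have nqm: "n = q * m" using cardCD m_def by (simp add: mult.commute)
    show "\<forall>s\<in>S \<union> {0}. \<forall>s'\<in>S \<union> {0}. s \<noteq> s' \<longrightarrow> \<not> [s = s'] (mod p ^ l)"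
    proof (intro ballI impI notI)
      fix d d' assume d: "d \<in> S \<union> {0}" and d': "d' \<in> S \<union> {0}" and ne: "d \<noteq> d'"
        and cg: "[d = d'] (mod p ^ l)"
      have dD: "d \<in> D" "d' \<in> D" using d d' D_def by auto
      define r where "r = (n - d) mod q"
      have r': "(n - d') mod q = r"
      proof -
        have "[n - d = n - d'] (mod q)"
          using cong_diff_nat[OF cong_refl cg[folded q_def], of n] Dn[OF dD(1)] Dn[OF dD(2)] by simp
        then show ?thesis unfolding r_def cong_def by simp
      qed
      define Cl where "Cl = {g. g < n \<and> g mod q = r}"
      have im: "hq ` (C \<times> {x}) \<subseteq> Cl" if "(n - x) mod q = r" for x
      proof
        fix g assume "g \<in> hq ` (C \<times> {x})"
        then obtain c where g: "g = (q * c + (n - x)) mod n" unfolding hq_def by auto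
        have "g mod q = (q * c + (n - x)) mod q" using g qn by (simp add: mod_mod_cancel)
        also have "\<dots> = r" using that by simp
        finally show "g \<in> Cl" unfolding Cl_def using g n by simp
      qed
      have cim: "card (hq ` (C \<times> {x})) = m" if "x \<in> D" for x
      proof -
        have "inj_on hq (C \<times> {x})" by (rule inj_on_subset[OF injq]) (use that in auto)
        then have "card (hq ` (C \<times> {x})) = card (C \<times> {x})" by (rule card_image)
        also have "\<dots> = m" by (simp add: card_cartesian_product m_def)
        finally show ?thesis .
      qed
      have disj: "hq ` (C \<times> {d}) \<inter> hq ` (C \<times> {d'}) = {}"
      proof (rule ccontr)
        assume "hq ` (C \<times> {d}) \<inter> hq ` (C \<times> {d'}) \<noteq> {}"
        then obtain y where "y \<in> hq ` (C \<times> {d})" "y \<in> hq ` (C \<times> {d'})" by blast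
        then obtain c c' where c: "c \<in> C" "c' \<in> C" and e: "hq (c, d) = hq (c', d')"
          by (auto simp del: image_iff elim!: imageE)
        have "(c, d) = (c', d')" by (rule inj_onD[OF injq e]) (use c dD in auto)
        then show False using ne by simp
      qed
      have fCl: "finite Cl" unfolding Cl_def by simp
      have "card (hq ` (C \<times> {d}) \<union> hq ` (C \<times> {d'})) = 2 * m"
        using card_Un_disjoint[OF _ _ disj] cim dD fC by simp
      moreover have "card (hq ` (C \<times> {d}) \<union> hq ` (C \<times> {d'})) \<le> card Cl"
      proof (rule card_mono[OF fCl])
        have "hq ` (C \<times> {d}) \<subseteq> Cl" by (rule im) (simp add: r_def)
        moreover have "hq ` (C \<times> {d'}) \<subseteq> Cl" by (rule im[OF r'])
        ultimately show "hq ` (C \<times> {d}) \<union> hq ` (C \<times> {d'}) \<subseteq> Cl" by (rule Un_least)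
      qed
      moreover have "card Cl \<le> m"
      proof -
        have "Cl \<subseteq> (\<lambda>j. r + q * j) ` {..<m}"
        proof
          fix g assume "g \<in> Cl"
          then have g: "g < n" "g mod q = r" unfolding Cl_def by auto
          have "g = g mod q + q * (g div q)" by simp
          then have "g = r + q * (g div q)" using g(2) by simp
          moreover have "g div q < m" using g(1) nqm q2 by (simp add: div_less_iff_less_mult mult.commute)
          ultimately show "g \<in> (\<lambda>j. r + q * j) ` {..<m}" by blast
        qed
        then have "card Cl \<le> card ((\<lambda>j. r + q * j) ` {..<m})" by (rule card_mono[rotated]) simp
        also have "\<dots> \<le> m" using card_image_le[of "{..<m}" "\<lambda>j. r + q * j"] by simp
        finally show ?thesis .
      qed
      ultimately show False using m0 by simp
    qed
  next
    assume H: "\<forall>s\<in>S \<union> {0}. \<forall>s'\<in>S \<union> {0}. s \<noteq> s' \<longrightarrow> \<not> [s = s'] (mod p ^ l)"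
    have H': "s = s'" if "s \<in> D" "s' \<in> D" "s mod q = s' mod q" for s s'
    proof (rule ccontr)
      assume "s \<noteq> s'"
      moreover have "[s = s'] (mod p ^ l)" using that(3) unfolding cong_def q_def .
      ultimately show False using H that(1,2) unfolding D_def by blast
    qed
    have surjD: "\<exists>d\<in>D. d mod q = r" if "r < q" for r
    proof -
      have "inj_on (\<lambda>d. d mod q) D" using H' by (auto intro: inj_onI)
      then have "card ((\<lambda>d. d mod q) ` D) = q" using cD by (simp add: card_image)
      moreover have "(\<lambda>d. d mod q) ` D \<subseteq> {..<q}" using q2 by auto
      ultimately have "(\<lambda>d. d mod q) ` D = {..<q}" by (intro card_subset_eq) auto
      then have "r \<in> (\<lambda>d. d mod q) ` D" using that by simp
      then show ?thesis by (auto simp del: image_iff elim!: imageE)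
    qed
    define C where "C = {x \<in> zn n. q dvd x}"
    have "perfect_code n S C"
      unfolding perfect_code_def
    proof (intro conjI ballI)
      show "C \<subseteq> zn n" unfolding C_def by auto
    next
      fix u v assume u: "u \<in> C" and v: "v \<in> C"
      show "\<not> cay_adj n S u v"
      proof
        assume "cay_adj n S u v"
        then have s: "(v + n - u) mod n \<in> S" and un: "u < n" unfolding cay_adj_def zn_def by auto
        have "q dvd v + n - u" using u v qn un unfolding C_def by (intro dvd_diff_nat) auto
        then have "q dvd (v + n - u) mod n" using qn by (simp add: dvd_mod)
        then have "((v + n - u) mod n) mod q = 0 mod q" by simp
        then have "(v + n - u) mod n = 0" using H' s unfolding D_def by blast
        then show False using s S0 by simp
      qed
    next
      fix v assume v: "v \<in> zn n - C"
      then have vn: "v < n" and vq: "\<not> q dvd v" unfolding C_def zn_def by auto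
      define r where "r = (n - v) mod q"
      obtain d where d: "d \<in> D" "d mod q = r" using surjD[of r] q2 r_def by auto
      have vd: "(v + d) mod q = 0"
      proof -
        have "(v + d) mod q = (v + d mod q) mod q" by (simp add: mod_add_right_eq)
        also have "\<dots> = (v + (n - v) mod q) mod q" using d r_def by simp
        also have "\<dots> = (v + (n - v)) mod q" by (simp add: mod_add_right_eq)
        finally have "(v + d) mod q = (v + (n - v)) mod q" .
        also have "\<dots> = 0" using vn qn by simp
        finally show ?thesis .
      qed
      have d0: "d \<noteq> 0"
      proof
        assume "d = 0"
        then have "q dvd v" using vd by (simp add: mod_eq_0_iff_dvd)
        then show False using vq by simp
      qed
      then have dS: "d \<in> S" using d D_def by simp
      define c where "c = (v + d) mod n"
      have cC: "c \<in> C" unfolding C_def c_def zn_def using n qn vd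
        by (auto simp: mod_mod_cancel mod_eq_0_iff_dvd[symmetric])
      have cn: "c < n" using c_def n by simp
      have adj: "cay_adj n S v c"
      proof -
        have "(c + n - v) mod n = d" using key2[OF cn vn Dn[OF d(1)]] c_def by simp
        then show ?thesis unfolding cay_adj_def zn_def using cn vn dS by simp
      qed
      show "\<exists>!c. c \<in> C \<and> cay_adj n S v c"
      proof (rule ex1I[of _ c])
        show "c \<in> C \<and> cay_adj n S v c" using cC adj by simp
      next
        fix c' assume c': "c' \<in> C \<and> cay_adj n S v c'"
        define s' where "s' = (c' + n - v) mod n"
        have s'S: "s' \<in> S" and c'n: "c' < n" using c' s'_def unfolding cay_adj_def zn_def by auto
        have s'n: "s' < n" using s'_def n by simp
        have c'eq: "c' = (v + s') mod n" using key2[OF c'n vn s'n] s'_def by simp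
        have "(v + s') mod q = 0"
        proof -
          have "(v + s') mod q = c' mod q" using c'eq qn by (simp add: mod_mod_cancel)
          then show ?thesis using c' unfolding C_def by (simp add: mod_eq_0_iff_dvd)
        qed
        then have "[v + s' = v + d] (mod q)" using vd by (simp add: cong_def)
        then have "[s' = d] (mod q)" by (simp add: cong_add_lcancel_nat)
        then have "s' = d" using H' s'S d(1) unfolding D_def cong_def by blast
        then show "c' = c" using c'eq c_def by simp
      qed
    qed
    then show "has_perfect_code n S" unfolding has_perfect_code_def by blast
  qed
qed

end
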